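(* Let $X=\{X_{\mathbf i}\}_{\mathbf i\in\mathbb R^2}$ be a max-stable random field with unit Fréchet margins $F(x)=\exp(-1/x)$, and let $\mathbf A,\mathbf B\subset\mathbb R^2$ be finite nonempty sets. Then the limits below exist and $$CI(\mathbf A,\mathbf B)=\sum_{\mathbf j\in\mathbf A}\frac{\sum_{\emptyset\ne\mathbf J\subseteq\mathbf B}(-1)^{|\mathbf J|+1}\lambda_{\mathbf J,\{\mathbf j\}}}{\epsilon_{\mathbf B}},$$ where $$CI(\mathbf A,\mathbf B)=\lim_{u\uparrow1}E\Big(\sum_{\mathbf j\in\mathbf A}\mathbf 1_{\{F(X_{\mathbf j})>u\}}\ \Big|\ \bigcup_{\mathbf i\in\mathbf B}\{F(X_{\mathbf i})>u\}\Big)$$ and, for finite nonempty $\mathbf J,\mathbf K\subset\mathbb R^2$, $\lambda_{\mathbf J,\mathbf K}=\lim_{u\uparrow1}P\big(\bigcap_{\mathbf j\in\mathbf J}\{F(X_{\mathbf j})>u\}\ \big|\ \bigcap_{\mathbf k\in\mathbf K}\{F(X_{\mathbf k})>u\}\big)$.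
   Context: A random field $X=\{X_{\mathbf i}\}_{\mathbf i\in\mathbb R^2}$ is max-stable with unit Fréchet margins if every $X_{\mathbf i}$ has distribution function $F(x)=\exp(-1/x)$, $x>0$, and for every finite set $\mathbf B=\{\mathbf i_1,\dots,\mathbf i_k\}\subset\mathbb R^2$ the joint distribution is a multivariate extreme value distribution $P(X_{\mathbf i_1}\le x_1,\dots,X_{\mathbf i_k}\le x_k)=\exp(-V_{\mathbf B}(x_1,\dots,x_k))$, $x_j>0$, where the exponent function $V_{\mathbf B}$ is homogeneous of order $-1$. The extremal coefficient of $\mathbf B$ is $\epsilon_{\mathbf B}=V_{\mathbf B}(1,\dots,1)$, so that $P(X_{\mathbf k}\le x\ \forall \mathbf k\in\mathbf B)=\exp(-\epsilon_{\mathbf B}/x)$ for $x>0$. *)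

theory Defs
  imports "HOL-Probability.Probability"
begin

definition frechet_F :: "real \<Rightarrow> real" where
  "frechet_F x = (if 0 < x then exp (- 1 / x) else 0)"

definition exponent_fun ::
  "'a measure \<Rightarrow> ('i \<Rightarrow> 'a \<Rightarrow> real) \<Rightarrow> 'i set \<Rightarrow> ('i \<Rightarrow> real) \<Rightarrow> real" where
  "exponent_fun M X B x = - ln (measure M {\<omega> \<in> space M. \<forall>k\<in>B. X k \<omega> \<le> x k})"

text \<open>Max-stable random field with unit Frechet margins: every finite-dimensional
  distribution is a multivariate extreme value distribution exp(-V_B), V_B finite and
  homogeneous of order -1 on the positive orthant.\<close>
definition max_stable_frechet :: "'a measure \<Rightarrow> ('i \<Rightarrow> 'a \<Rightarrow> real) \<Rightarrow> bool" where
  "max_stable_frechet M X \<longleftrightarrow>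
     prob_space M \<and>
     (\<forall>i. X i \<in> borel_measurable M) \<and>
     (\<forall>i x. 0 < x \<longrightarrow> measure M {\<omega> \<in> space M. X i \<omega> \<le> x} = frechet_F x) \<and>
     (\<forall>B. finite B \<and> B \<noteq> {} \<longrightarrow>
        (\<forall>x. (\<forall>k\<in>B. 0 < x k) \<longrightarrow> 0 < measure M {\<omega> \<in> space M. \<forall>k\<in>B. X k \<omega> \<le> x k}) \<and>
        (\<forall>x t. (\<forall>k\<in>B. 0 < x k) \<and> 0 < t \<longrightarrow>
            exponent_fun M X B (\<lambda>k. t * x k) = exponent_fun M X B x / t))"

definition extremal_coeff :: "'a measure \<Rightarrow> ('i \<Rightarrow> 'a \<Rightarrow> real) \<Rightarrow> 'i set \<Rightarrow> real" where
  "extremal_coeff M X B = exponent_fun M X B (\<lambda>_. 1)"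

definition exceed :: "'a measure \<Rightarrow> ('i \<Rightarrow> 'a \<Rightarrow> real) \<Rightarrow> real \<Rightarrow> 'i \<Rightarrow> 'a set" where
  "exceed M X u j = {\<omega> \<in> space M. frechet_F (X j \<omega>) > u}"

definition cond_prob_ev :: "'a measure \<Rightarrow> 'a set \<Rightarrow> 'a set \<Rightarrow> real" where
  "cond_prob_ev M E C = measure M (E \<inter> C) / measure M C"

definition cond_exp_ev :: "'a measure \<Rightarrow> ('a \<Rightarrow> real) \<Rightarrow> 'a set \<Rightarrow> real" where
  "cond_exp_ev M Y C = (\<integral>\<omega>. Y \<omega> * indicator C \<omega> \<partial>M) / measure M C"

definition lambda_fun :: "'a measure \<Rightarrow> ('i \<Rightarrow> 'a \<Rightarrow> real) \<Rightarrow> 'i set \<Rightarrow> 'i set \<Rightarrow> real \<Rightarrow> real" where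
  "lambda_fun M X J K u =
     cond_prob_ev M (\<Inter>j\<in>J. exceed M X u j) (\<Inter>k\<in>K. exceed M X u k)"

definition tail_lambda :: "'a measure \<Rightarrow> ('i \<Rightarrow> 'a \<Rightarrow> real) \<Rightarrow> 'i set \<Rightarrow> 'i set \<Rightarrow> real" where
  "tail_lambda M X J K = Lim (at_left 1) (lambda_fun M X J K)"

definition CI_fun :: "'a measure \<Rightarrow> ('i \<Rightarrow> 'a \<Rightarrow> real) \<Rightarrow> 'i set \<Rightarrow> 'i set \<Rightarrow> real \<Rightarrow> real" where
  "CI_fun M X A B u =
     cond_exp_ev M (\<lambda>\<omega>. \<Sum>j\<in>A. indicator (exceed M X u j) \<omega>) (\<Union>i\<in>B. exceed M X u i)"

end

theory Submission
  imports Defs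
begin

lemma ind_expand:
  fixes P :: "'i \<Rightarrow> bool"
  assumes "finite K"
  shows "(if \<forall>k\<in>K. \<not> P k then 1 else 0 :: real) = (\<Sum>I\<in>Pow K. (-1) ^ card I * (if \<forall>k\<in>I. P k then 1 else 0))"
proof -
  have p: "(\<Prod>k\<in>I. (if P k then 1 else 0::real)) = (if \<forall>k\<in>I. P k then 1 else 0)" if "finite I" for I
    using that by (induction I rule: finite_induct) auto
  have q: "(\<Prod>k\<in>K. (if \<not> P k then 1 else 0::real)) = (if \<forall>k\<in>K. \<not> P k then 1 else 0)"
    using assms by (induction K rule: finite_induct) auto
  have "(\<Prod>k\<in>K. (if \<not> P k then 1 else 0::real)) = (\<Prod>k\<in>K. (- (if P k then 1 else 0)) + 1)"
    by (intro prod.cong) auto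
  also have "\<dots> = (\<Sum>I\<in>Pow K. (\<Prod>k\<in>I. - (if P k then 1 else 0::real)) * (\<Prod>k\<in>K-I. 1))"
    by (rule prod_add[OF assms])
  also have "\<dots> = (\<Sum>I\<in>Pow K. (-1) ^ card I * (if \<forall>k\<in>I. P k then 1 else 0))"
  proof (intro sum.cong refl)
    fix I assume "I \<in> Pow K"
    then have fI: "finite I" using assms finite_subset by blast
    have "(\<Prod>k\<in>I. - (if P k then 1 else 0::real)) = (-1)^card I * (\<Prod>k\<in>I. (if P k then 1 else 0::real))"
      using fI by (induction I rule: finite_induct) auto
    then show "(\<Prod>k\<in>I. - (if P k then 1 else 0::real)) * (\<Prod>k\<in>K-I. 1) = (-1) ^ card I * (if \<forall>k\<in>I. P k then 1 else 0)"
      using p[OF fI] by simp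
  qed
  finally have r: "(\<Prod>k\<in>K. (if \<not> P k then 1 else 0::real)) = (\<Sum>I\<in>Pow K. (-1) ^ card I * (if \<forall>k\<in>I. P k then 1 else 0))" .
  show ?thesis by (subst q[symmetric]) (rule r)
qed

lemma union_expand:
  fixes Q :: "'i \<Rightarrow> bool"
  assumes "finite B"
  shows "(if \<exists>k\<in>B. Q k then 1 else 0::real) = (\<Sum>J\<in>{J. J\<subseteq>B \<and> J\<noteq>{}}. (-1)^(card J+1) * (if \<forall>k\<in>J. Q k then 1 else 0))"
proof -
  let ?S = "{J. J\<subseteq>B \<and> J\<noteq>{}}"
  have PS: "Pow B = insert {} ?S" by auto
  have fS: "finite ?S" by (rule finite_subset[of _ "Pow B"]) (use assms in auto)
  have "(if \<forall>k\<in>B. \<not> Q k then 1 else 0 :: real) = (\<Sum>I\<in>Pow B. (-1) ^ card I * (if \<forall>k\<in>I. Q k then 1 else 0))"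
    by (rule ind_expand[OF assms])
  also have "\<dots> = 1 + (\<Sum>I\<in>?S. (-1) ^ card I * (if \<forall>k\<in>I. Q k then 1 else 0))"
    unfolding PS using fS by (subst sum.insert) auto
  finally have h: "(if \<forall>k\<in>B. \<not> Q k then 1 else 0 :: real) = 1 + (\<Sum>I\<in>?S. (-1) ^ card I * (if \<forall>k\<in>I. Q k then 1 else 0))" .
  have "(if \<exists>k\<in>B. Q k then 1 else 0::real) = 1 - (if \<forall>k\<in>B. \<not> Q k then 1 else 0)" by auto
  then have "(if \<exists>k\<in>B. Q k then 1 else 0::real) = - (\<Sum>I\<in>?S. (-1) ^ card I * (if \<forall>k\<in>I. Q k then 1 else 0))"
    using h by linarith
  also have "\<dots> = (\<Sum>J\<in>?S. (-1)^(card J+1) * (if \<forall>k\<in>J. Q k then 1 else 0))"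
    by (simp add: sum_negf[symmetric])
  finally show ?thesis .
qed

lemma alt_sum:
  assumes "finite K" "K \<noteq> {}"
  shows "(\<Sum>I\<in>Pow K. (-1::real) ^ card I) = 0"
  using ind_expand[OF assms(1), of "\<lambda>_. True"] assms(2) by simp

lemma h_lim: "((\<lambda>u. (1 - u powr c) / (1 - u)) \<longlongrightarrow> c) (at_left (1::real))"
proof -
  have "((\<lambda>u. u powr c) has_real_derivative c * 1 powr (c - 1)) (at 1)"
    by (rule has_real_derivative_powr) simp
  then have "((\<lambda>y. (y powr c - 1 powr c) / (y - 1)) \<longlongrightarrow> c) (at 1)"
    unfolding has_field_derivative_iff by simp
  then have "((\<lambda>y. (y powr c - 1 powr c) / (y - 1)) \<longlongrightarrow> c) (at_left 1)"
    by (rule tendsto_mono[rotated]) (simp add: at_le)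
  moreover have "(y powr c - 1 powr c) / (y - 1) = (1 - y powr c) / (1 - y)" for y :: real
    by (metis minus_diff_eq minus_divide_divide powr_one_eq_one)
  ultimately show ?thesis by simp
qed

definition xu :: "real \<Rightarrow> real" where "xu u = - 1 / ln u"

lemma xu_pos: "0 < u \<Longrightarrow> u < 1 \<Longrightarrow> 0 < xu u"
  unfolding xu_def by (simp add: divide_neg_neg)

lemma F_gt:
  assumes "0 < u" "u < 1"
  shows "(u < frechet_F y) \<longleftrightarrow> (xu u < y)"
proof (cases "0 < y")
  case True
  have L: "ln u < 0" using assms by simp
  have "(u < frechet_F y) \<longleftrightarrow> u < exp (- 1 / y)"
    using True by (simp add: frechet_F_def)
  also have "\<dots> \<longleftrightarrow> ln u < ln (exp (- 1 / y))"
    using assms by (subst ln_less_cancel_iff) auto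
  also have "\<dots> \<longleftrightarrow> ln u < - 1 / y" by simp
  also have "\<dots> \<longleftrightarrow> xu u < y"
    using True L unfolding xu_def by (auto simp: field_simps)
  finally show ?thesis .
next
  case False
  then show ?thesis using xu_pos[OF assms] assms by (simp add: frechet_F_def)
qed

context
  fixes M :: "'a measure" and X :: "'i \<Rightarrow> 'a \<Rightarrow> real"
  assumes ms: "max_stable_frechet M X"
begin

lemma ps: "prob_space M" using ms unfolding max_stable_frechet_def by (elim conjE) assumption

lemma measall: "\<forall>i. X i \<in> borel_measurable M" using ms unfolding max_stable_frechet_def by (elim conjE) assumption

lemma measX: "X i \<in> borel_measurable M" using measall by (rule spec)

lemma marg: "\<forall>i x. 0 < x \<longrightarrow> measure M {\<omega> \<in> space M. X i \<omega> \<le> x} = frechet_F x"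
  using ms unfolding max_stable_frechet_def by (elim conjE) assumption

lemma mstab: "\<forall>B. finite B \<and> B \<noteq> {} \<longrightarrow>
        (\<forall>x. (\<forall>k\<in>B. 0 < x k) \<longrightarrow> 0 < measure M {\<omega> \<in> space M. \<forall>k\<in>B. X k \<omega> \<le> x k}) \<and>
        (\<forall>x t. (\<forall>k\<in>B. 0 < x k) \<and> 0 < t \<longrightarrow>
            exponent_fun M X B (\<lambda>k. t * x k) = exponent_fun M X B x / t)"
  using ms unfolding max_stable_frechet_def by (elim conjE) assumption

lemma exceed_eq: "0 < u \<Longrightarrow> u < 1 \<Longrightarrow> exceed M X u k = {\<omega>\<in>space M. xu u < X k \<omega>}"
  by (simp add: exceed_def F_gt)

lemma exceed_sets: assumes "0 < u" "u < 1" shows "exceed M X u k \<in> sets M"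
  unfolding exceed_eq[OF assms] by (rule borel_measurable_less[OF borel_measurable_const measX])

lemma fin_em: "emeasure M A < \<infinity>"
proof -
  interpret prob_space M by (rule ps)
  show ?thesis using emeasure_finite[of A] by (simp add: less_top[symmetric])
qed

lemma C_sets: "finite I \<Longrightarrow> {\<omega>\<in>space M. \<forall>k\<in>I. X k \<omega> \<le> x} \<in> sets M"
  by (rule sets.sets_Collect_finite_All) (auto intro: borel_measurable_le[OF measX borel_measurable_const])

lemma C_meas:
  assumes "finite I" "0 < u" "u < 1"
  shows "measure M {\<omega>\<in>space M. \<forall>k\<in>I. X k \<omega> \<le> xu u} = u powr extremal_coeff M X I"
proof (cases "I = {}")
  case True
  then show ?thesis using prob_space.prob_space[OF ps] assms
    by (simp add: extremal_coeff_def exponent_fun_def)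
next
  case False
  note MS = mstab[rule_format, OF conjI[OF assms(1) False]]
  have pos: "0 < measure M {\<omega>\<in>space M. \<forall>k\<in>I. X k \<omega> \<le> xu u}"
    using conjunct1[OF MS, rule_format, of "\<lambda>_. xu u"] xu_pos[OF assms(2,3)] by simp
  have H: "\<forall>x t. (\<forall>k\<in>I. 0 < x k) \<and> 0 < t \<longrightarrow> exponent_fun M X I (\<lambda>k. t * x k) = exponent_fun M X I x / t"
    by (rule conjunct2[OF MS])
  have hom: "exponent_fun M X I (\<lambda>k. xu u * 1) = exponent_fun M X I (\<lambda>_. 1) / xu u"
    using H[rule_format, of "\<lambda>_. 1" "xu u"] xu_pos[OF assms(2,3)] by simp
  have e: "- exponent_fun M X I (\<lambda>k. xu u * 1) = extremal_coeff M X I * ln u"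
    using hom assms by (simp add: extremal_coeff_def xu_def field_simps)
  have "measure M {\<omega>\<in>space M. \<forall>k\<in>I. X k \<omega> \<le> xu u} = exp (- exponent_fun M X I (\<lambda>k. xu u * 1))"
    using pos by (simp add: exponent_fun_def)
  also have "\<dots> = exp (extremal_coeff M X I * ln u)"
    by (simp only: e)
  also have "\<dots> = u powr extremal_coeff M X I"
    using assms by (simp add: powr_def)
  finally show ?thesis .
qed

lemma eps1: "extremal_coeff M X {j} = 1"
proof -
  have "measure M {\<omega>\<in>space M. X j \<omega> \<le> 1} = exp (-1)"
    using marg[rule_format, of 1 j] by (simp add: frechet_F_def)
  then show ?thesis by (simp add: extremal_coeff_def exponent_fun_def)
qed

lemma PE:
  assumes "0 < u" "u < 1"
  shows "measure M (exceed M X u j) = 1 - u"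
proof -
  have "exceed M X u j = space M - {\<omega>\<in>space M. \<forall>k\<in>{j}. X k \<omega> \<le> xu u}"
    using assms by (auto simp: exceed_eq)
  then have "measure M (exceed M X u j) = 1 - measure M {\<omega>\<in>space M. \<forall>k\<in>{j}. X k \<omega> \<le> xu u}"
    using prob_space.prob_compl[OF ps C_sets[of "{j}" "xu u"]] by simp
  also have "\<dots> = 1 - u" using C_meas[of "{j}" u] assms eps1 by simp
  finally show ?thesis .
qed

lemma PU:
  assumes "finite B" "0 < u" "u < 1"
  shows "measure M (\<Union>i\<in>B. exceed M X u i) = 1 - u powr extremal_coeff M X B"
proof -
  have "(\<Union>i\<in>B. exceed M X u i) = space M - {\<omega>\<in>space M. \<forall>k\<in>B. X k \<omega> \<le> xu u}"
    using assms by (auto simp: exceed_eq)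
  then show ?thesis
    using prob_space.prob_compl[OF ps C_sets[of B "xu u"]] C_meas[OF assms] assms by simp
qed

lemma inter_meas:
  assumes "finite K" "K \<noteq> {}" "0 < u" "u < 1"
  shows "measure M (\<Inter>k\<in>K. exceed M X u k) = (\<Sum>I\<in>Pow K. (-1)^card I * u powr extremal_coeff M X I)"
proof -
  let ?C = "\<lambda>I. {\<omega>\<in>space M. \<forall>k\<in>I. X k \<omega> \<le> xu u}"
  have S: "(\<Inter>k\<in>K. exceed M X u k) = {\<omega>\<in>space M. \<forall>k\<in>K. \<not> X k \<omega> \<le> xu u}"
    using assms by (auto simp: exceed_eq not_le)
  have fP: "finite (Pow K)" using assms by simp
  have "measure M (\<Inter>k\<in>K. exceed M X u k) = integral\<^sup>L M (indicator {\<omega>\<in>space M. \<forall>k\<in>K. \<not> X k \<omega> \<le> xu u} :: 'a \<Rightarrow> real)"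
    unfolding S by (simp add: Int_absorb2)
  also have "\<dots> = (\<integral>\<omega>. (\<Sum>I\<in>Pow K. (-1)^card I * indicator (?C I) \<omega>) \<partial>M)"
  proof (rule Bochner_Integration.integral_cong[OF refl])
    fix \<omega> assume w: "\<omega> \<in> space M"
    show "indicator {\<omega>\<in>space M. \<forall>k\<in>K. \<not> X k \<omega> \<le> xu u} \<omega> = (\<Sum>I\<in>Pow K. (-1)^card I * indicator (?C I) \<omega> :: real)"
    proof -
      have i1: "\<And>Q. indicator {\<omega>\<in>space M. Q \<omega>} \<omega> = (if Q \<omega> then 1 else 0 :: real)"
        using w by (simp add: indicator_def of_bool_def)
      show ?thesis
        unfolding i1 by (rule ind_expand[OF assms(1)])
    qed
  qed
  also have "\<dots> = (\<Sum>I\<in>Pow K. (\<integral>\<omega>. (-1)^card I * indicator (?C I) \<omega> \<partial>M))"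
  proof (rule Bochner_Integration.integral_sum)
    fix I assume "I \<in> Pow K"
    then have "finite I" using assms(1) finite_subset by blast
    then show "integrable M (\<lambda>\<omega>. (-1)^card I * indicator (?C I) \<omega> :: real)"
      by (intro integrable_mult_right integrable_real_indicator C_sets fin_em)
  qed
  also have "\<dots> = (\<Sum>I\<in>Pow K. (-1)^card I * measure M (?C I))"
  proof (intro sum.cong refl)
    fix I
    have "?C I \<inter> space M = ?C I" by auto
    then show "(\<integral>\<omega>. (-1)^card I * indicator (?C I) \<omega> \<partial>M) = (-1)^card I * measure M (?C I)"
      by simp
  qed
  also have "\<dots> = (\<Sum>I\<in>Pow K. (-1)^card I * u powr extremal_coeff M X I)"
    by (intro sum.cong refl) (auto simp: C_meas assms finite_subset[OF _ assms(1)])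
  finally show ?thesis .
qed

lemma lam_lim:
  assumes "finite J" "J \<noteq> {}"
  shows "(lambda_fun M X J {j} \<longlongrightarrow> - (\<Sum>I\<in>Pow (insert j J). (-1)^card I * extremal_coeff M X I)) (at_left 1)"
proof -
  let ?K = "insert j J"
  have ev: "\<forall>\<^sub>F u in at_left 1. lambda_fun M X J {j} u =
      - (\<Sum>I\<in>Pow ?K. (-1)^card I * ((1 - u powr extremal_coeff M X I) / (1 - u)))"
    using eventually_at_left_real[of 0 "1::real", OF zero_less_one]
  proof (rule eventually_mono)
    fix u :: real assume "u \<in> {0<..<1}"
    then have u: "0 < u" "u < 1" by auto
    have "lambda_fun M X J {j} u = measure M (\<Inter>k\<in>?K. exceed M X u k) / (1 - u)"
      unfolding lambda_fun_def cond_prob_ev_def using PE[OF u] by (simp add: Int_commute)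
    also have "\<dots> = (\<Sum>I\<in>Pow ?K. (-1)^card I * u powr extremal_coeff M X I) / (1 - u)"
      using inter_meas[of ?K u] assms u by simp
    also have "(\<Sum>I\<in>Pow ?K. (-1)^card I * u powr extremal_coeff M X I)
        = (\<Sum>I\<in>Pow ?K. (-1)^card I * u powr extremal_coeff M X I) - (\<Sum>I\<in>Pow ?K. (-1::real)^card I)"
      using alt_sum[of ?K] assms by simp
    also have "\<dots> = - (\<Sum>I\<in>Pow ?K. (-1)^card I * (1 - u powr extremal_coeff M X I))"
      by (simp add: sum_subtractf[symmetric] sum_negf[symmetric] algebra_simps)
    finally show "lambda_fun M X J {j} u =
      - (\<Sum>I\<in>Pow ?K. (-1)^card I * ((1 - u powr extremal_coeff M X I) / (1 - u)))"
      by (simp add: sum_divide_distrib)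
  qed
  show ?thesis
    by (subst tendsto_cong[OF ev]) (intro tendsto_intros h_lim)
qed

lemma inter_sets: "finite J \<Longrightarrow> J \<noteq> {} \<Longrightarrow> 0 < u \<Longrightarrow> u < 1 \<Longrightarrow> (\<Inter>k\<in>J. exceed M X u k) \<in> sets M"
  by (intro sets.finite_INT exceed_sets) auto

lemma CI_eq:
  assumes "finite A" "finite B" "B \<noteq> {}" "0 < u" "u < 1"
  shows "CI_fun M X A B u = (\<Sum>j\<in>A. \<Sum>J\<in>{J. J\<subseteq>B \<and> J\<noteq>{}}. (-1)^(card J+1) * lambda_fun M X J {j} u)
           * ((1 - u) / (1 - u powr extremal_coeff M X B))"
proof -
  let ?E = "exceed M X u"
  let ?S = "{J. J\<subseteq>B \<and> J\<noteq>{}}"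
  let ?U = "\<Union>i\<in>B. ?E i"
  have fS: "finite ?S" by (rule finite_subset[of _ "Pow B"]) (use assms in auto)
  have pw: "(\<Sum>j\<in>A. indicator (?E j) \<omega>) * indicator ?U \<omega> =
      (\<Sum>j\<in>A. \<Sum>J\<in>?S. (-1)^(card J+1) * indicator ((\<Inter>k\<in>J. ?E k) \<inter> ?E j) \<omega> :: real)" for \<omega>
  proof -
    have "indicator ?U \<omega> = (if \<exists>k\<in>B. \<omega> \<in> ?E k then 1 else 0::real)"
      by (simp add: indicator_def of_bool_def)
    also have "\<dots> = (\<Sum>J\<in>?S. (-1)^(card J+1) * (if \<forall>k\<in>J. \<omega> \<in> ?E k then 1 else 0::real))"
      by (rule union_expand[OF assms(2)])
    finally have iU: "indicator ?U \<omega> = (\<Sum>J\<in>?S. (-1)^(card J+1) * (if \<forall>k\<in>J. \<omega> \<in> ?E k then 1 else 0::real))" .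
    have t: "indicator (?E j) \<omega> * (if \<forall>k\<in>J. \<omega> \<in> ?E k then 1 else 0::real) = indicator ((\<Inter>k\<in>J. ?E k) \<inter> ?E j) \<omega>" for j J
      by (simp add: indicator_def of_bool_def)
    have "(\<Sum>j\<in>A. indicator (?E j) \<omega>) * indicator ?U \<omega> = (\<Sum>j\<in>A. \<Sum>J\<in>?S. (-1)^(card J+1) * (indicator (?E j) \<omega> * (if \<forall>k\<in>J. \<omega> \<in> ?E k then 1 else 0::real)))"
      unfolding iU sum_distrib_right by (intro sum.cong refl) (simp add: sum_distrib_left ac_simps)
    then show ?thesis unfolding t .
  qed
  have mJ: "measure M ((\<Inter>k\<in>J. ?E k) \<inter> ?E j) = lambda_fun M X J {j} u * (1 - u)" for J j
    using PE[OF assms(4,5), of j] assms(4,5)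
    by (simp add: lambda_fun_def cond_prob_ev_def)
  have sub: "(\<Inter>k\<in>J. ?E k) \<inter> ?E j \<subseteq> space M" for J j
    by (auto simp: exceed_def)
  have int: "(\<integral>\<omega>. (\<Sum>j\<in>A. \<Sum>J\<in>?S. (-1)^(card J+1) * indicator ((\<Inter>k\<in>J. ?E k) \<inter> ?E j) \<omega> :: real) \<partial>M)
      = (\<Sum>j\<in>A. \<Sum>J\<in>?S. (-1)^(card J+1) * (lambda_fun M X J {j} u * (1 - u)))"
  proof -
    have ii: "integrable M (indicator ((\<Inter>k\<in>J. ?E k) \<inter> ?E j) :: 'a \<Rightarrow> real)" if "J \<in> ?S" for J j
      using that assms by (intro integrable_real_indicator fin_em sets.Int inter_sets exceed_sets)
        (auto intro: finite_subset)
    have i2: "integrable M (\<lambda>\<omega>. (-1)^(card J+1) * indicator ((\<Inter>k\<in>J. ?E k) \<inter> ?E j) \<omega> :: real)"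
      if "J \<in> ?S" for J j
      by (rule integrable_mult_right) (rule ii[OF that])
    have i3: "integrable M (\<lambda>\<omega>. \<Sum>J\<in>?S. (-1)^(card J+1) * indicator ((\<Inter>k\<in>J. ?E k) \<inter> ?E j) \<omega> :: real)" for j
      by (rule Bochner_Integration.integrable_sum) (rule i2)
    have "(\<integral>\<omega>. (\<Sum>j\<in>A. \<Sum>J\<in>?S. (-1)^(card J+1) * indicator ((\<Inter>k\<in>J. ?E k) \<inter> ?E j) \<omega> :: real) \<partial>M)
      = (\<Sum>j\<in>A. (\<integral>\<omega>. (\<Sum>J\<in>?S. (-1)^(card J+1) * indicator ((\<Inter>k\<in>J. ?E k) \<inter> ?E j) \<omega> :: real) \<partial>M))"
      by (rule Bochner_Integration.integral_sum) (rule i3)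
    also have "\<dots> = (\<Sum>j\<in>A. \<Sum>J\<in>?S. (\<integral>\<omega>. ((-1)^(card J+1) * indicator ((\<Inter>k\<in>J. ?E k) \<inter> ?E j) \<omega> :: real) \<partial>M))"
      by (intro sum.cong refl Bochner_Integration.integral_sum i2)
    also have "\<dots> = (\<Sum>j\<in>A. \<Sum>J\<in>?S. (-1)^(card J+1) * (lambda_fun M X J {j} u * (1 - u)))"
      by (intro sum.cong refl) (simp add: Int_absorb2[OF sub] mJ)
    finally show ?thesis .
  qed
  have "CI_fun M X A B u = (\<Sum>j\<in>A. \<Sum>J\<in>?S. (-1)^(card J+1) * (lambda_fun M X J {j} u * (1 - u))) / measure M ?U"
    unfolding CI_fun_def cond_exp_ev_def pw int ..
  also have "\<dots> = (\<Sum>j\<in>A. \<Sum>J\<in>?S. (-1)^(card J+1) * lambda_fun M X J {j} u) * (1 - u) / measure M ?U"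
    by (simp add: sum_distrib_right mult.assoc)
  also have "\<dots> = (\<Sum>j\<in>A. \<Sum>J\<in>?S. (-1)^(card J+1) * lambda_fun M X J {j} u) * ((1 - u) / (1 - u powr extremal_coeff M X B))"
    using PU[OF assms(2,4,5)] by simp
  finally show ?thesis .
qed

lemma eps_nz:
  assumes "finite B" "B \<noteq> {}"
  shows "extremal_coeff M X B \<noteq> 0"
proof
  assume e: "extremal_coeff M X B = 0"
  interpret prob_space M by (rule ps)
  obtain b where b: "b \<in> B" using assms by auto
  have u: "0 < (1/2::real)" "(1/2::real) < 1" by auto
  have "measure M (exceed M X (1/2) b) \<le> measure M (\<Union>i\<in>B. exceed M X (1/2) i)"
    using b assms by (intro finite_measure_mono) (auto intro!: sets.finite_UN exceed_sets)
  then show False using PE[OF u, of b] PU[OF assms(1) u] e by simp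
qed

end

theorem mainTheorem2:
  fixes M :: "'a measure" and X :: "real \<times> real \<Rightarrow> 'a \<Rightarrow> real"
    and A B :: "(real \<times> real) set"
  assumes "max_stable_frechet M X"
    and "finite A" and "A \<noteq> {}" and "finite B" and "B \<noteq> {}"
  shows "(\<forall>J. J \<subseteq> B \<and> J \<noteq> {} \<longrightarrow> (\<forall>j\<in>A. \<exists>L. (lambda_fun M X J {j} \<longlongrightarrow> L) (at_left 1)))
    \<and> (CI_fun M X A B \<longlongrightarrow>
         (\<Sum>j\<in>A. (\<Sum>J\<in>{J. J \<subseteq> B \<and> J \<noteq> {}}. (-1) ^ (card J + 1) * tail_lambda M X J {j})
                  / extremal_coeff M X B)) (at_left 1)"
proof -
  let ?S = "{J. J\<subseteq>B \<and> J\<noteq>{}}"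
  let ?e = "extremal_coeff M X B"
  have lt: "(lambda_fun M X J {j} \<longlongrightarrow> tail_lambda M X J {j}) (at_left 1)" if "J \<in> ?S" for J j
  proof -
    have "finite J" using that assms(4) finite_subset by auto
    from lam_lim[OF assms(1) this, of j] that
    have l: "(lambda_fun M X J {j} \<longlongrightarrow> - (\<Sum>I\<in>Pow (insert j J). (-1)^card I * extremal_coeff M X I)) (at_left 1)"
      by auto
    then show ?thesis unfolding tail_lambda_def using tendsto_Lim[OF trivial_limit_at_left_real l] by simp
  qed
  have part1: "\<forall>J. J \<subseteq> B \<and> J \<noteq> {} \<longrightarrow> (\<forall>j\<in>A. \<exists>L. (lambda_fun M X J {j} \<longlongrightarrow> L) (at_left 1))"
    using lt by blast
  have enz: "?e \<noteq> 0" using eps_nz[OF assms(1,4,5)] .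
  have ratio: "((\<lambda>u. (1 - u) / (1 - u powr ?e)) \<longlongrightarrow> 1 / ?e) (at_left 1)"
  proof -
    have ev: "\<forall>\<^sub>F u in at_left 1. (1 - u) / (1 - u powr ?e) = 1 / ((1 - u powr ?e) / (1 - u))"
      using eventually_at_left_real[of 0 "1::real", OF zero_less_one] by (rule eventually_mono) auto
    show ?thesis
      by (subst tendsto_cong[OF ev]) (intro tendsto_intros h_lim enz)
  qed
  have ev2: "\<forall>\<^sub>F u in at_left 1. CI_fun M X A B u = (\<Sum>j\<in>A. \<Sum>J\<in>?S. (-1)^(card J+1) * lambda_fun M X J {j} u)
           * ((1 - u) / (1 - u powr ?e))"
    using eventually_at_left_real[of 0 "1::real", OF zero_less_one]
    by (rule eventually_mono) (use CI_eq[OF assms(1,2,4,5)] in auto)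
  have "((\<lambda>u. (\<Sum>j\<in>A. \<Sum>J\<in>?S. (-1)^(card J+1) * lambda_fun M X J {j} u) * ((1 - u) / (1 - u powr ?e)))
      \<longlongrightarrow> (\<Sum>j\<in>A. \<Sum>J\<in>?S. (-1)^(card J+1) * tail_lambda M X J {j}) * (1 / ?e)) (at_left 1)"
    by (intro tendsto_mult tendsto_sum tendsto_mult_left lt ratio) auto
  then have "(CI_fun M X A B \<longlongrightarrow> (\<Sum>j\<in>A. \<Sum>J\<in>?S. (-1)^(card J+1) * tail_lambda M X J {j}) * (1 / ?e)) (at_left 1)"
    by (subst tendsto_cong[OF ev2])
  moreover have "(\<Sum>j\<in>A. \<Sum>J\<in>?S. (-1)^(card J+1) * tail_lambda M X J {j}) * (1 / ?e)
      = (\<Sum>j\<in>A. (\<Sum>J\<in>?S. (-1) ^ (card J + 1) * tail_lambda M X J {j}) / ?e)"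
    by (simp add: sum_divide_distrib)
  ultimately show ?thesis using part1 by simp
qed

end
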